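(* Let $\Gamma$ be an uncountable set and $Z=\ell_2(\Gamma)$. Let $\theta:\mathbb{R}\to[0,\infty)$, $\theta(t)=0$ for $t\le0$ and $\theta(t)=t^2$ for $t\ge0$, and define $f:Z\to\mathbb{R}$ by $f(x)=\sum_{\gamma\in\Gamma}\theta(x_\gamma)$. Then $f$ is a continuous convex function with $0\le f(x)\le\|x\|^2$, $f$ is not constant on any line $\{x+tv:t\in\mathbb{R}\}$ with $v\neq0$ (so that the subspace $Y_f=\{v\in Z: f(tv)-f(0)-\langle 0,tv\rangle=0\ \forall t\}$ equals $\{0\}$), and yet there is no continuous linear form $\ell:Z\to\mathbb{R}$ such that $f-\ell$ is directionally coercive.
   Context: $\ell_2(\Gamma)$ is the Hilbert space of all $x:\Gamma\to\mathbb{R}$, written $x=(x_\gamma)_{\gamma\in\Gamma}$, with $\sum_{\gamma\in\Gamma}|x_\gamma|^2<\infty$, norm $\|x\|=(\sum_\gamma|x_\gamma|^2)^{1/2}$ and inner product $\langle x,y\rangle=\sum_\gamma x_\gamma y_\gamma$. A function $g$ on $Z$ is directionally coercive if $\lim_{t\to\infty}g(x+tv)=\infty$ for all $x\in Z$, $v\in Z\setminus\{0\}$. *)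

theory Defs
  imports "HOL-Analysis.Analysis"
begin

text \<open>The Hilbert space l2(Gamma), with Gamma the universe of a type 'a,
  represented as the set of square-summable real functions on 'a.\<close>

definition l2 :: "('a \<Rightarrow> real) set" where
  "l2 = {x. (\<lambda>g. (x g)\<^sup>2) summable_on UNIV}"

definition l2norm :: "('a \<Rightarrow> real) \<Rightarrow> real" where
  "l2norm x = sqrt (\<Sum>\<^sub>\<infinity>g. (x g)\<^sup>2)"

definition l2inner :: "('a \<Rightarrow> real) \<Rightarrow> ('a \<Rightarrow> real) \<Rightarrow> real" where
  "l2inner x y = (\<Sum>\<^sub>\<infinity>g. x g * y g)"

definition theta :: "real \<Rightarrow> real" where
  "theta t = (if t \<le> 0 then 0 else t\<^sup>2)"

definition ftheta :: "('a \<Rightarrow> real) \<Rightarrow> real" where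
  "ftheta x = (\<Sum>\<^sub>\<infinity>g. theta (x g))"

definition l2_continuous :: "(('a \<Rightarrow> real) \<Rightarrow> real) \<Rightarrow> bool" where
  "l2_continuous f \<longleftrightarrow> (\<forall>x\<in>l2. \<forall>e>0. \<exists>d>0. \<forall>y\<in>l2.
      l2norm (\<lambda>g. y g - x g) < d \<longrightarrow> \<bar>f y - f x\<bar> < e)"

definition l2_convex :: "(('a \<Rightarrow> real) \<Rightarrow> real) \<Rightarrow> bool" where
  "l2_convex f \<longleftrightarrow> (\<forall>x\<in>l2. \<forall>y\<in>l2. \<forall>u::real. 0 \<le> u \<and> u \<le> 1 \<longrightarrow>
      f (\<lambda>g. u * x g + (1 - u) * y g) \<le> u * f x + (1 - u) * f y)"

text \<open>Continuous linear form on l2 (its values off l2 are irrelevant).\<close>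
definition l2_cont_linear :: "(('a \<Rightarrow> real) \<Rightarrow> real) \<Rightarrow> bool" where
  "l2_cont_linear l \<longleftrightarrow>
     (\<forall>x\<in>l2. \<forall>y\<in>l2. l (\<lambda>g. x g + y g) = l x + l y) \<and>
     (\<forall>x\<in>l2. \<forall>c::real. l (\<lambda>g. c * x g) = c * l x) \<and>
     (\<exists>C. \<forall>x\<in>l2. \<bar>l x\<bar> \<le> C * l2norm x)"

definition l2_dir_coercive :: "(('a \<Rightarrow> real) \<Rightarrow> real) \<Rightarrow> bool" where
  "l2_dir_coercive h \<longleftrightarrow> (\<forall>x\<in>l2. \<forall>v\<in>l2. v \<noteq> (\<lambda>_. 0) \<longrightarrow>
      filterlim (\<lambda>t::real. h (\<lambda>g. x g + t * v g)) at_top at_top)"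

end

theory Submission
  imports Defs
begin

lemma amgm: fixes u w e :: real assumes "e > 0"
  shows "u * w \<le> u\<^sup>2 / e + e * w\<^sup>2 / 4"
proof -
  have h: "0 \<le> (u - e*w/2)\<^sup>2" by simp
  have "(u - e*w/2)\<^sup>2 = u\<^sup>2 - e*(u*w) + e*(e*w\<^sup>2/4)" by (simp add: power2_eq_square field_simps)
  with h have "e*(u*w) \<le> u\<^sup>2 + e*(e*w\<^sup>2/4)" by linarith
  hence "e*(u*w) \<le> e * (u\<^sup>2 / e + e * w\<^sup>2 / 4)" using assms by (simp add: distrib_left)
  thus ?thesis using assms by simp
qed

lemma theta_lip: assumes "e > 0"
  shows "theta a \<le> theta b + (a - b)\<^sup>2 / e + e * (a\<^sup>2 + b\<^sup>2)"
proof -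
  have A: "\<bar>a - b\<bar> * (\<bar>a\<bar> + \<bar>b\<bar>) \<le> \<bar>a - b\<bar>\<^sup>2 / e + e * (\<bar>a\<bar> + \<bar>b\<bar>)\<^sup>2 / 4"
    by (rule amgm[OF assms])
  have B: "(\<bar>a\<bar> + \<bar>b\<bar>)\<^sup>2 \<le> 4 * (a\<^sup>2 + b\<^sup>2)"
  proof -
    have "(\<bar>a\<bar> + \<bar>b\<bar>)\<^sup>2 = a\<^sup>2 + b\<^sup>2 + 2*(\<bar>a\<bar>*\<bar>b\<bar>)" by (simp add: power2_eq_square algebra_simps)
    moreover have "2*(\<bar>a\<bar>*\<bar>b\<bar>) \<le> a\<^sup>2 + b\<^sup>2"
      using sum_squares_bound[of "\<bar>a\<bar>" "\<bar>b\<bar>"] by simp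
    ultimately have "(\<bar>a\<bar> + \<bar>b\<bar>)\<^sup>2 \<le> 2 * (a\<^sup>2 + b\<^sup>2)" by simp
    also have "\<dots> \<le> 4 * (a\<^sup>2 + b\<^sup>2)" by simp
    finally show ?thesis .
  qed
  have amgm2: "\<bar>a - b\<bar> * (\<bar>a\<bar> + \<bar>b\<bar>) \<le> (a - b)\<^sup>2 / e + e * (a\<^sup>2 + b\<^sup>2)"
  proof -
    have "e * (\<bar>a\<bar> + \<bar>b\<bar>)\<^sup>2 / 4 \<le> e * (a\<^sup>2 + b\<^sup>2)" using B assms by simp
    thus ?thesis using A by simp
  qed
  have "theta a - theta b \<le> \<bar>a - b\<bar> * (\<bar>a\<bar> + \<bar>b\<bar>)"
  proof -
    define p where "p = max a 0" define q where "q = max b 0"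
    have "theta a = p\<^sup>2" "theta b = q\<^sup>2" by (auto simp: theta_def p_def q_def)
    moreover have "p\<^sup>2 - q\<^sup>2 = (p - q) * (p + q)" by (simp add: power2_eq_square algebra_simps)
    moreover have "\<bar>p - q\<bar> \<le> \<bar>a - b\<bar>" "0 \<le> p + q" "p + q \<le> \<bar>a\<bar> + \<bar>b\<bar>" by (auto simp: p_def q_def)
    moreover have "(p - q) * (p + q) \<le> \<bar>p - q\<bar> * (p + q)"
      by (simp add: \<open>0 \<le> p + q\<close> mult_right_mono)
    moreover have "\<bar>p - q\<bar> * (p + q) \<le> \<bar>a - b\<bar> * (\<bar>a\<bar> + \<bar>b\<bar>)"
      using calculation by (intro mult_mono) auto
    ultimately show ?thesis by linarith
  qed
  thus ?thesis using amgm2 by linarith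
qed
lemma theta_nonneg: "0 \<le> theta t" by (simp add: theta_def)
lemma theta_le_sq: "theta t \<le> t\<^sup>2" by (simp add: theta_def)

lemma l2_sq: "x \<in> l2 \<Longrightarrow> (\<lambda>g. (x g)\<^sup>2) summable_on UNIV" by (simp add: l2_def)

lemma sq_comb_le: fixes p q :: real shows "(p + q)\<^sup>2 \<le> 2 * p\<^sup>2 + 2 * q\<^sup>2"
proof -
  have "0 \<le> (p - q)\<^sup>2" by simp
  thus ?thesis by (simp add: power2_eq_square algebra_simps)
qed

lemma l2_comb: assumes "x \<in> l2" "y \<in> l2" shows "(\<lambda>g. a * x g + b * y g) \<in> l2"
proof -
  have "(\<lambda>g. 2 * a\<^sup>2 * (x g)\<^sup>2 + 2 * b\<^sup>2 * (y g)\<^sup>2) summable_on UNIV"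
    using summable_on_add[OF summable_on_cmult_right[OF l2_sq[OF assms(1)], of "2*a\<^sup>2"]
       summable_on_cmult_right[OF l2_sq[OF assms(2)], of "2*b\<^sup>2"]] by (simp add: mult.assoc)
  moreover have "(a * x g + b * y g)\<^sup>2 \<le> 2 * a\<^sup>2 * (x g)\<^sup>2 + 2 * b\<^sup>2 * (y g)\<^sup>2" for g
    using sq_comb_le[of "a * x g" "b * y g"] by (simp add: power_mult_distrib)
  ultimately show ?thesis unfolding l2_def
    by (auto intro: summable_on_comparison_test)
qed

lemma l2_line: "x \<in> l2 \<Longrightarrow> v \<in> l2 \<Longrightarrow> (\<lambda>g. x g + t * v g) \<in> l2"
  using l2_comb[of x v 1 t] by simp
lemma l2_diff: "x \<in> l2 \<Longrightarrow> y \<in> l2 \<Longrightarrow> (\<lambda>g. y g - x g) \<in> l2"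
  using l2_comb[of y x 1 "-1"] by simp
lemma l2_scale: "v \<in> l2 \<Longrightarrow> (\<lambda>g. t * v g) \<in> l2"
  using l2_comb[of v v t 0] by simp

lemma theta_summ: "x \<in> l2 \<Longrightarrow> (\<lambda>g. theta (x g)) summable_on UNIV"
  using l2_sq by (auto intro: summable_on_comparison_test theta_le_sq theta_nonneg)

lemma ftheta_nonneg: "0 \<le> ftheta x"
  unfolding ftheta_def by (rule infsum_nonneg) (simp add: theta_nonneg)

lemma term_le_infsum: fixes f :: "'a \<Rightarrow> real"
  assumes "f summable_on UNIV" "\<And>g. 0 \<le> f g" shows "f c \<le> infsum f UNIV"
  using finite_sum_le_infsum[OF assms(1), of "{c}"] assms(2) by simp

lemma l2norm_sq: "(l2norm x)\<^sup>2 = (\<Sum>\<^sub>\<infinity>g. (x g)\<^sup>2)"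
  unfolding l2norm_def by (simp add: infsum_nonneg)

lemma nonconst:
  assumes x: "x \<in> l2" and v: "v \<in> l2" and nz: "v \<noteq> (\<lambda>_. 0)"
  shows "\<exists>t. ftheta (\<lambda>g. x g + t * v g) \<noteq> c"
proof -
  obtain c0 where c0: "v c0 \<noteq> 0" using nz by auto
  define t where "t = (\<bar>c\<bar> + \<bar>x c0\<bar> + 1) / v c0"
  have eq: "x c0 + t * v c0 = x c0 + \<bar>c\<bar> + \<bar>x c0\<bar> + 1" using c0 by (simp add: t_def)
  define z where "z = x c0 + t * v c0"
  have z1: "z \<ge> \<bar>c\<bar> + 1" using eq z_def by linarith
  hence "theta z = z\<^sup>2" by (simp add: theta_def)
  also have "z\<^sup>2 \<ge> z"
  proof -
    have "1 \<le> z" using z1 by linarith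
    hence "z * 1 \<le> z * z" by (intro mult_left_mono) auto
    thus ?thesis by (simp add: power2_eq_square)
  qed
  finally have "theta z > c" using z1 by linarith
  moreover have "theta z \<le> ftheta (\<lambda>g. x g + t * v g)"
    unfolding ftheta_def z_def
    by (rule term_le_infsum[OF theta_summ[OF l2_line[OF x v]]]) (simp add: theta_nonneg)
  ultimately show ?thesis by (intro exI[of _ t]) linarith
qed

lemma theta_convex: assumes "0 \<le> u" "u \<le> 1"
  shows "theta (u * a + (1 - u) * b) \<le> u * theta a + (1 - u) * theta b"
proof -
  define p where "p = max a 0" define q where "q = max b 0"
  define m where "m = max (u * a + (1 - u) * b) 0"
  have tp: "theta a = p\<^sup>2" "theta b = q\<^sup>2" "theta (u * a + (1 - u) * b) = m\<^sup>2"
    by (auto simp: theta_def p_def q_def m_def)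
  have "u * a \<le> u * p" "(1 - u) * b \<le> (1 - u) * q" "0 \<le> u * p" "0 \<le> (1-u) * q"
    using assms by (auto simp: p_def q_def intro: mult_left_mono)
  hence m1: "m \<le> u * p + (1 - u) * q" "0 \<le> m" by (auto simp: m_def)
  hence "m\<^sup>2 \<le> (u * p + (1 - u) * q)\<^sup>2" by (intro power_mono) auto
  also have "(u * p + (1 - u) * q)\<^sup>2 = u * p\<^sup>2 + (1 - u) * q\<^sup>2 - u * (1 - u) * (p - q)\<^sup>2"
    by (simp add: power2_eq_square algebra_simps)
  also have "\<dots> \<le> u * p\<^sup>2 + (1 - u) * q\<^sup>2"
  proof -
    have "0 \<le> u * (1 - u) * (p - q)\<^sup>2" by (intro mult_nonneg_nonneg) (use assms in auto)
    thus ?thesis by linarith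
  qed
  finally show ?thesis using tp by simp
qed

lemma part_convex: "l2_convex ftheta"
  unfolding l2_convex_def
proof (intro ballI allI impI)
  fix x y :: "'a \<Rightarrow> real" and u :: real
  assume x: "x \<in> l2" and y: "y \<in> l2" and u: "0 \<le> u \<and> u \<le> 1"
  have s1: "(\<lambda>g. theta (u * x g + (1 - u) * y g)) summable_on UNIV"
    using theta_summ[OF l2_comb[OF x y]] .
  have sx: "(\<lambda>g. u * theta (x g)) summable_on UNIV" by (rule summable_on_cmult_right[OF theta_summ[OF x]])
  have sy: "(\<lambda>g. (1 - u) * theta (y g)) summable_on UNIV" by (rule summable_on_cmult_right[OF theta_summ[OF y]])
  have "ftheta (\<lambda>g. u * x g + (1 - u) * y g) \<le> (\<Sum>\<^sub>\<infinity>g. u * theta (x g) + (1 - u) * theta (y g))"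
    unfolding ftheta_def
    by (rule infsum_mono[OF s1 summable_on_add[OF sx sy]]) (use u theta_convex in auto)
  also have "\<dots> = u * ftheta x + (1 - u) * ftheta y"
    unfolding ftheta_def infsum_add[OF sx sy]
    by (simp add: infsum_cmult_right theta_summ x y)
  finally show "ftheta (\<lambda>g. u * x g + (1 - u) * y g) \<le> u * ftheta x + (1 - u) * ftheta y" .
qed

lemma part_bound: "x \<in> l2 \<Longrightarrow> 0 \<le> ftheta x \<and> ftheta x \<le> (l2norm x)\<^sup>2"
proof -
  assume x: "x \<in> l2"
  have "ftheta x \<le> (\<Sum>\<^sub>\<infinity>g. (x g)\<^sup>2)" unfolding ftheta_def
    by (rule infsum_mono[OF theta_summ[OF x] l2_sq[OF x]]) (rule theta_le_sq)
  thus ?thesis using ftheta_nonneg[of x] l2norm_sq[of x] by linarith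
qed

lemma ftheta_zero: "ftheta (\<lambda>_. 0) = 0" by (simp add: ftheta_def theta_def)

lemma part_Y: "{v \<in> (l2 :: ('a \<Rightarrow> real) set). \<forall>t::real.
          ftheta (\<lambda>g. t * v g) - ftheta (\<lambda>_. 0) - l2inner (\<lambda>_. 0) (\<lambda>g. t * v g) = 0}
        = {\<lambda>_. 0}"
proof -
  have z1: "ftheta (\<lambda>_::'a. 0) = 0" by (simp add: ftheta_def theta_def)
  have z2: "\<And>w::'a\<Rightarrow>real. l2inner (\<lambda>_. 0) w = 0"
    by (simp add: l2inner_def)
  have l0: "(\<lambda>_. 0) \<in> (l2 :: ('a \<Rightarrow> real) set)" by (simp add: l2_def)
  have A: "v = (\<lambda>_. 0)" if "v \<in> l2" "\<forall>t. ftheta (\<lambda>g. t * v g) = 0" for v :: "'a \<Rightarrow> real"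
  proof (rule ccontr)
    assume "v \<noteq> (\<lambda>_. 0)"
    from nonconst[OF l0 that(1) this, of 0] obtain t where t: "ftheta (\<lambda>g. 0 + t * v g) \<noteq> 0"
      by (elim exE)
    have "(\<lambda>g. 0 + t * v g) = (\<lambda>g. t * v g)" by simp
    with t that(2) show False by metis
  qed
  have B: "ftheta (\<lambda>g::'a. t * 0) = 0" for t :: real using z1 by simp
  show ?thesis
  proof (rule set_eqI, rule iffI)
    fix v assume "v \<in> {v \<in> (l2 :: ('a \<Rightarrow> real) set). \<forall>t::real.
          ftheta (\<lambda>g. t * v g) - ftheta (\<lambda>_. 0) - l2inner (\<lambda>_. 0) (\<lambda>g. t * v g) = 0}"
    hence "v \<in> l2" "\<forall>t. ftheta (\<lambda>g. t * v g) = 0" by (simp_all add: z1 z2 ftheta_zero)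
    thus "v \<in> {\<lambda>_. 0}" using A by blast
  next
    fix v :: "'a \<Rightarrow> real" assume "v \<in> {\<lambda>_. 0}"
    hence v: "v = (\<lambda>_. 0)" by simp
    show "v \<in> {v \<in> (l2 :: ('a \<Rightarrow> real) set). \<forall>t::real.
          ftheta (\<lambda>g. t * v g) - ftheta (\<lambda>_. 0) - l2inner (\<lambda>_. 0) (\<lambda>g. t * v g) = 0}"
      unfolding v using l0 B z1 z2 ftheta_zero by simp
  qed
qed


lemma l2_sum_sq: assumes "x \<in> l2" "y \<in> l2"
  shows "(\<Sum>\<^sub>\<infinity>g. a * (x g)\<^sup>2 + b * (y g)\<^sup>2) = a * (\<Sum>\<^sub>\<infinity>g. (x g)\<^sup>2) + b * (\<Sum>\<^sub>\<infinity>g. (y g)\<^sup>2)"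
  using infsum_add[OF summable_on_cmult_right[OF l2_sq[OF assms(1)], of a] summable_on_cmult_right[OF l2_sq[OF assms(2)], of b]]
  by (simp add: infsum_cmult_right l2_sq assms)

lemma part_cont: "l2_continuous ftheta"
  unfolding l2_continuous_def
proof (intro ballI allI impI)
  fix x :: "'a \<Rightarrow> real" and eps :: real
  assume x: "x \<in> l2" and eps: "eps > 0"
  define N where "N = (\<Sum>\<^sub>\<infinity>g. (x g)\<^sup>2)"
  have N0: "N \<ge> 0" unfolding N_def by (rule infsum_nonneg) simp
  define e where "e = eps / (2 * (3 * N + 2))"
  have e0: "e > 0" using eps N0 by (simp add: e_def)
  have P: "3 * N + 2 \<noteq> 0" using N0 by linarith
  have eN: "e * (3 * N + 2) = eps / 2" unfolding e_def using P by (simp add: field_simps)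
  define m where "m = min 1 (e * eps / 2)"
  have m0: "m > 0" using e0 eps by (simp add: m_def)
  define d where "d = sqrt m"
  have d0: "d > 0" using m0 by (simp add: d_def)
  show "\<exists>d>0. \<forall>y\<in>l2. l2norm (\<lambda>g. y g - x g) < d \<longrightarrow> \<bar>ftheta y - ftheta x\<bar> < eps"
  proof (intro exI[of _ d] conjI ballI impI d0)
    fix y :: "'a \<Rightarrow> real" assume y: "y \<in> l2" and yd: "l2norm (\<lambda>g. y g - x g) < d"
    define w where "w = (\<lambda>g. y g - x g)"
    have w: "w \<in> l2" unfolding w_def by (rule l2_diff[OF x y])
    define D where "D = (\<Sum>\<^sub>\<infinity>g. (w g)\<^sup>2)"
    define Y where "Y = (\<Sum>\<^sub>\<infinity>g. (y g)\<^sup>2)"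
    have D0: "D \<ge> 0" unfolding D_def by (rule infsum_nonneg) simp
    have "sqrt D < sqrt m" using yd unfolding l2norm_def d_def D_def w_def .
    hence Dm: "D < m" by simp
    have YD: "Y \<le> 2 * N + 2 * D"
    proof -
      have "Y \<le> (\<Sum>\<^sub>\<infinity>g. 2 * (x g)\<^sup>2 + 2 * (w g)\<^sup>2)" unfolding Y_def
      proof (rule infsum_mono[OF l2_sq[OF y]])
        show "(\<lambda>g. 2 * (x g)\<^sup>2 + 2 * (w g)\<^sup>2) summable_on UNIV"
          by (intro summable_on_add summable_on_cmult_right l2_sq x w)
        fix g show "(y g)\<^sup>2 \<le> 2 * (x g)\<^sup>2 + 2 * (w g)\<^sup>2"
          using sq_comb_le[of "x g" "w g"] by (simp add: w_def)
      qed
      thus ?thesis using l2_sum_sq[OF x w, of 2 2] by (simp add: N_def D_def)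
    qed
    define B where "B = (\<lambda>g. (1 / e) * (w g)\<^sup>2 + e * ((y g)\<^sup>2 + (x g)\<^sup>2))"
    have Bs: "B summable_on UNIV" unfolding B_def
      by (intro summable_on_add summable_on_cmult_right l2_sq x w y)
    have BS: "(\<Sum>\<^sub>\<infinity>g. B g) = (1 / e) * D + e * (Y + N)"
    proof -
      have s1: "(\<lambda>g. (1 / e) * (w g)\<^sup>2) summable_on UNIV" by (intro summable_on_cmult_right l2_sq w)
      have s2: "(\<lambda>g. e * ((y g)\<^sup>2 + (x g)\<^sup>2)) summable_on UNIV"
        by (intro summable_on_add summable_on_cmult_right l2_sq x y)
      have "(\<Sum>\<^sub>\<infinity>g. B g) = (1 / e) * D + e * (\<Sum>\<^sub>\<infinity>g. (y g)\<^sup>2 + (x g)\<^sup>2)"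
        unfolding B_def infsum_add[OF s1 s2] D_def infsum_cmult_right' ..
      also have "(\<Sum>\<^sub>\<infinity>g. (y g)\<^sup>2 + (x g)\<^sup>2) = Y + N"
        unfolding Y_def N_def by (rule infsum_add[OF l2_sq[OF y] l2_sq[OF x]])
      finally show ?thesis .
    qed
    have p1: "theta (y g) \<le> theta (x g) + B g" for g
      using theta_lip[OF e0, of "y g" "x g"] by (simp add: B_def w_def)
    have p2: "theta (x g) \<le> theta (y g) + B g" for g
      using theta_lip[OF e0, of "x g" "y g"] by (simp add: B_def w_def power2_commute add.commute)
    have i1: "ftheta y \<le> ftheta x + (\<Sum>\<^sub>\<infinity>g. B g)"
    proof -
      have "ftheta y \<le> (\<Sum>\<^sub>\<infinity>g. theta (x g) + B g)" unfolding ftheta_def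
        by (rule infsum_mono[OF theta_summ[OF y] summable_on_add[OF theta_summ[OF x] Bs]]) (rule p1)
      thus ?thesis unfolding ftheta_def infsum_add[OF theta_summ[OF x] Bs] .
    qed
    have i2: "ftheta x \<le> ftheta y + (\<Sum>\<^sub>\<infinity>g. B g)"
    proof -
      have "ftheta x \<le> (\<Sum>\<^sub>\<infinity>g. theta (y g) + B g)" unfolding ftheta_def
        by (rule infsum_mono[OF theta_summ[OF x] summable_on_add[OF theta_summ[OF y] Bs]]) (rule p2)
      thus ?thesis unfolding ftheta_def infsum_add[OF theta_summ[OF y] Bs] .
    qed
    have D1: "D < 1" and De: "D < e * eps / 2" using Dm by (auto simp: m_def)
    have "(1 / e) * D < eps / 2" using De e0 by (simp add: field_simps)
    moreover have "e * (Y + N) \<le> e * (3 * N + 2)"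
      using YD D1 e0 by (intro mult_left_mono) auto
    ultimately have "(\<Sum>\<^sub>\<infinity>g. B g) < eps" using BS eN by linarith
    thus "\<bar>ftheta y - ftheta x\<bar> < eps" using i1 i2 by linarith
  qed
qed


definition ind :: "'a set \<Rightarrow> 'a \<Rightarrow> real" where
  "ind F = (\<lambda>g. if g \<in> F then 1 else 0)"

lemma ind_sq_sum: assumes "finite F"
  shows "(\<lambda>g. (ind F g)\<^sup>2) summable_on UNIV" "(\<Sum>\<^sub>\<infinity>g. (ind F g)\<^sup>2) = real (card F)"
proof -
  show "(\<lambda>g. (ind F g)\<^sup>2) summable_on UNIV"
    using summable_on_cong_neutral[of UNIV F "\<lambda>g. (ind F g)\<^sup>2" "\<lambda>_. 1::real"] assms
    by (auto simp: ind_def)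
  have "(\<Sum>\<^sub>\<infinity>g. (ind F g)\<^sup>2) = infsum (\<lambda>_. 1::real) F"
    by (rule infsum_cong_neutral) (auto simp: ind_def)
  also have "\<dots> = real (card F)" using assms by simp
  finally show "(\<Sum>\<^sub>\<infinity>g. (ind F g)\<^sup>2) = real (card F)" .
qed

lemma ind_l2: "finite F \<Longrightarrow> ind F \<in> l2"
  using ind_sq_sum(1) by (simp add: l2_def)

lemma ind_norm: "finite F \<Longrightarrow> l2norm (ind F) = sqrt (real (card F))"
  using ind_sq_sum(2) by (simp add: l2norm_def)

lemma l_ind:
  assumes A: "\<forall>x\<in>l2. \<forall>y\<in>l2. l (\<lambda>g. x g + y g) = l x + l y"
    and H: "\<forall>x\<in>l2. \<forall>c::real. l (\<lambda>g. c * x g) = c * l x"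
    and F: "finite F"
  shows "l (ind F) = (\<Sum>a\<in>F. l (ind {a}))"
  using F
proof (induction F rule: finite_induct)
  case empty
  have l0: "(\<lambda>_. 0) \<in> (l2 :: ('a \<Rightarrow> real) set)" by (simp add: l2_def)
  have "l (\<lambda>_::'a. 0) = 0" using H[rule_format, OF l0, of 0] by simp
  moreover have "ind {} = (\<lambda>g::'a. 0)" by (simp add: ind_def)
  ultimately show ?case by simp
next
  case (insert a F)
  have "ind (insert a F) = (\<lambda>g. ind {a} g + ind F g)" using insert(2) by (auto simp: ind_def)
  hence "l (ind (insert a F)) = l (ind {a}) + l (ind F)"
    using A ind_l2[of "{a}"] ind_l2[OF insert(1)] by simp
  thus ?case using insert by simp
qed

lemma part_nolin:
  assumes unc: "uncountable (UNIV :: 'a set)"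
  shows "\<not> (\<exists>l :: ('a \<Rightarrow> real) \<Rightarrow> real. l2_cont_linear l
          \<and> l2_dir_coercive (\<lambda>x. ftheta x - l x))"
proof
  assume "\<exists>l :: ('a \<Rightarrow> real) \<Rightarrow> real. l2_cont_linear l \<and> l2_dir_coercive (\<lambda>x. ftheta x - l x)"
  then obtain l :: "('a \<Rightarrow> real) \<Rightarrow> real" where lin: "l2_cont_linear l"
    and coe: "l2_dir_coercive (\<lambda>x. ftheta x - l x)" by blast
  from lin have A: "\<forall>x\<in>l2. \<forall>y\<in>l2. l (\<lambda>g. x g + y g) = l x + l y"
    and H: "\<forall>x\<in>l2. \<forall>c::real. l (\<lambda>g. c * x g) = c * l x"
    and "\<exists>C. \<forall>x\<in>l2. \<bar>l x\<bar> \<le> C * l2norm x" unfolding l2_cont_linear_def by blast+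
  then obtain C where C: "\<forall>x\<in>l2. \<bar>l x\<bar> \<le> C * l2norm x" by blast
  have "\<exists>c. l (ind {c}) \<le> 0"
  proof (rule ccontr)
    assume "\<not> ?thesis"
    hence pos: "\<And>c. l (ind {c}) > 0" by (meson not_le)
    define S where "S = (\<lambda>n::nat. {c. 1 / real (Suc n) < l (ind {c})})"
    have "UNIV = (\<Union>n. S n)"
    proof (rule set_eqI)
      fix c :: 'a
      obtain k where k: "k > 0" "inverse (real k) < l (ind {c})"
        using ex_inverse_of_nat_less[OF pos[of c]] by blast
      have "Suc (k - 1) = k" using k(1) by simp
      hence "c \<in> S (k - 1)" using k(2) unfolding S_def by (simp add: inverse_eq_divide)
      thus "c \<in> UNIV \<longleftrightarrow> c \<in> (\<Union>n. S n)" by blast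
    qed
    moreover have "\<not> (\<forall>n. finite (S n))"
    proof
      assume "\<forall>n. finite (S n)"
      hence "countable (\<Union>n. S n)" by (intro countable_UN) (auto intro: countable_finite)
      with unc show False using calculation by simp
    qed
    ultimately obtain n where inf: "infinite (S n)" by blast
    define K where "K = C * real (Suc n)"
    define N where "N = nat \<lceil>K\<^sup>2\<rceil> + 1"
    obtain F where F: "finite F" "card F = N" "F \<subseteq> S n"
      using infinite_arbitrarily_large[OF inf] by blast
    have "real N / real (Suc n) = (\<Sum>a\<in>F. 1 / real (Suc n))" using F by simp
    also have "\<dots> \<le> (\<Sum>a\<in>F. l (ind {a}))"
      using F(3) by (intro sum_mono) (auto simp: S_def less_imp_le)
    also have "\<dots> = l (ind F)" using l_ind[OF A H F(1)] by simp
    also have "\<dots> \<le> C * sqrt (real N)" using C ind_l2[OF F(1)] ind_norm[OF F(1)] F(2) by force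
    finally have le: "real N / real (Suc n) \<le> C * sqrt (real N)" .
    have "real N > K\<^sup>2" unfolding N_def by linarith
    hence "sqrt (real N) > sqrt (K\<^sup>2)" by (intro real_sqrt_less_mono)
    hence sK: "sqrt (real N) > K" by simp
    have "N \<ge> 1" unfolding N_def by simp
    hence sN: "sqrt (real N) > 0" by simp
    have "real N = sqrt (real N) * sqrt (real N)" by simp
    also have "\<dots> > K * sqrt (real N)" using sK sN by (intro mult_strict_right_mono)
    finally have "real N > C * sqrt (real N) * real (Suc n)" by (simp add: K_def algebra_simps)
    hence "real N / real (Suc n) > C * sqrt (real N)" by (simp add: field_simps)
    with le show False by linarith
  qed
  then obtain c where c: "l (ind {c}) \<le> 0" by blast
  define v where "v = (\<lambda>g. (-1) * ind {c} g)"
  have l0: "(\<lambda>_. 0) \<in> (l2 :: ('a \<Rightarrow> real) set)" by (simp add: l2_def)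
  have v: "v \<in> l2" unfolding v_def by (rule l2_scale[OF ind_l2]) simp
  have vnz: "v \<noteq> (\<lambda>_. 0)"
  proof
    assume "v = (\<lambda>_. 0)" hence "v c = 0" by simp
    thus False by (simp add: v_def ind_def)
  qed
  have lim: "filterlim (\<lambda>t::real. ftheta (\<lambda>g. 0 + t * v g) - l (\<lambda>g. 0 + t * v g)) at_top at_top"
    using coe[unfolded l2_dir_coercive_def, rule_format, OF l0 v vnz] by simp
  have val: "ftheta (\<lambda>g. 0 + t * v g) - l (\<lambda>g. 0 + t * v g) \<le> 0" if t: "t \<ge> 0" for t :: real
  proof -
    have eq: "(\<lambda>g. 0 + t * v g) = (\<lambda>g. (-t) * ind {c} g)" by (simp add: v_def)
    have "theta ((-t) * ind {c} g) = 0" for g using t by (simp add: theta_def ind_def)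
    hence f0: "ftheta (\<lambda>g. (-t) * ind {c} g) = 0" by (simp add: ftheta_def)
    have ic: "ind {c} \<in> l2" by (simp add: ind_l2)
    have "l (\<lambda>g. (-t) * ind {c} g) = (-t) * l (ind {c})" by (rule H[rule_format, OF ic])
    thus ?thesis unfolding eq f0 using t c by (simp add: mult_nonneg_nonpos)
  qed
  from lim have "eventually (\<lambda>t. 1 \<le> ftheta (\<lambda>g. 0 + t * v g) - l (\<lambda>g. 0 + t * v g)) at_top"
    by (simp add: filterlim_at_top)
  moreover have "eventually (\<lambda>t::real. t \<ge> 0) at_top" by (rule eventually_ge_at_top)
  ultimately have "eventually (\<lambda>t::real. False) at_top"
    by eventually_elim (use val in force)
  thus False by simp
qed


theorem mainTheorem9:
  assumes "uncountable (UNIV :: 'a set)"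
  shows "l2_continuous (ftheta :: ('a \<Rightarrow> real) \<Rightarrow> real)
    \<and> l2_convex (ftheta :: ('a \<Rightarrow> real) \<Rightarrow> real)
    \<and> (\<forall>x\<in>(l2 :: ('a \<Rightarrow> real) set). 0 \<le> ftheta x \<and> ftheta x \<le> (l2norm x)\<^sup>2)
    \<and> (\<forall>x\<in>(l2 :: ('a \<Rightarrow> real) set). \<forall>v\<in>l2. v \<noteq> (\<lambda>_. 0) \<longrightarrow>
          \<not> (\<exists>c. \<forall>t::real. ftheta (\<lambda>g. x g + t * v g) = c))
    \<and> {v \<in> (l2 :: ('a \<Rightarrow> real) set). \<forall>t::real.
          ftheta (\<lambda>g. t * v g) - ftheta (\<lambda>_. 0) - l2inner (\<lambda>_. 0) (\<lambda>g. t * v g) = 0}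
        = {\<lambda>_. 0}
    \<and> \<not> (\<exists>l :: ('a \<Rightarrow> real) \<Rightarrow> real. l2_cont_linear l
          \<and> l2_dir_coercive (\<lambda>x. ftheta x - l x))"
proof (intro conjI)
  show "l2_continuous (ftheta :: ('a \<Rightarrow> real) \<Rightarrow> real)" by (rule part_cont)
  show "l2_convex (ftheta :: ('a \<Rightarrow> real) \<Rightarrow> real)" by (rule part_convex)
  show "\<forall>x\<in>(l2 :: ('a \<Rightarrow> real) set). 0 \<le> ftheta x \<and> ftheta x \<le> (l2norm x)\<^sup>2"
    using part_bound by blast
  show "\<forall>x\<in>(l2 :: ('a \<Rightarrow> real) set). \<forall>v\<in>l2. v \<noteq> (\<lambda>_. 0) \<longrightarrow>
          \<not> (\<exists>c. \<forall>t::real. ftheta (\<lambda>g. x g + t * v g) = c)"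
    using nonconst by blast
  show "{v \<in> (l2 :: ('a \<Rightarrow> real) set). \<forall>t::real.
          ftheta (\<lambda>g. t * v g) - ftheta (\<lambda>_. 0) - l2inner (\<lambda>_. 0) (\<lambda>g. t * v g) = 0}
        = {\<lambda>_. 0}" by (rule part_Y)
  show "\<not> (\<exists>l :: ('a \<Rightarrow> real) \<Rightarrow> real. l2_cont_linear l
          \<and> l2_dir_coercive (\<lambda>x. ftheta x - l x))" by (rule part_nolin[OF assms])
qed

end
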